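(* Let $R$ be a $*$-reducing ring, let $p,q\in R$ be projections, and put $\overline{p}=1-p$, $\overline{q}=1-q$. Suppose that at least one of the following elements is MP invertible: $1-pq$, $1-pqp$, $p-pqp$, $p-pq$, $p-qp$, $1-qp$, $1-qpq$, $q-qpq$, $q-qp$, $q-pq$, $p+q-pq$, $p+\overline{p}q\overline{p}$, $\overline{p}q\overline{p}$, $p+q-qp$, $q+\overline{q}p\overline{q}$, $\overline{q}p\overline{q}$, $p(1-q)$, $p-q$, $(1-p)q$. (Then all of them are MP invertible.) Then (1) $(1-pq)^{\dagger}p\overline{q}p = p\overline{q}(p\overline{q}p)^{\dagger} = p\overline{q}p(1-qp)^{\dagger} = p(p\overline{q})^{\dagger} = (\overline{q}p)^{\dagger}p = p(p-q)^{\dagger}p$; (2) $(p+\overline{p}q)^{\dagger}\overline{p}q\overline{p} = (q+p\overline{q})^{\dagger}\overline{p}q\overline{p} = \overline{p}q(\overline{p}q\overline{p})^{\dagger} = \overline{p}q\overline{p}(p+q\overline{p})^{\dagger} = \overline{p}q\overline{p}(q+\overline{q}p)^{\dagger} = \overline{p}(\overline{p}q)^{\dagger} = (q\overline{p})^{\dagger}\overline{p} = \overline{p}(q-p)^{\dagger}\overline{p}$.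
   Context: $R$ is an associative ring with identity $1$ and an involution $a\mapsto a^*$ (satisfying $(a^* )^*=a$, $(a+b)^*=a^*+b^*$, $(ab)^*=b^*a^*$). $R$ is $*$-reducing if $a^*a=0$ implies $a=0$ for all $a\in R$. An element $a$ is MP invertible if there is $b$ with $aba=a$, $bab=b$, $(ab)^*=ab$, $(ba)^*=ba$; this $b$ is unique and written $a^{\dagger}$. A projection is an element $p$ with $p^2=p=p^*$. *)

theory Defs
  imports Main
begin

definition involution :: "('a::ring_1 \<Rightarrow> 'a) \<Rightarrow> bool" where
  "involution st \<longleftrightarrow>
     (\<forall>a. st (st a) = a) \<and> (\<forall>a b. st (a + b) = st a + st b) \<and> (\<forall>a b. st (a * b) = st b * st a)"

definition star_reducing :: "('a::ring_1 \<Rightarrow> 'a) \<Rightarrow> bool" where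
  "star_reducing st \<longleftrightarrow> (\<forall>a. st a * a = 0 \<longrightarrow> a = 0)"

definition projection :: "('a::ring_1 \<Rightarrow> 'a) \<Rightarrow> 'a \<Rightarrow> bool" where
  "projection st p \<longleftrightarrow> p * p = p \<and> st p = p"

definition mp_inverse :: "('a::ring_1 \<Rightarrow> 'a) \<Rightarrow> 'a \<Rightarrow> 'a \<Rightarrow> bool" where
  "mp_inverse st a b \<longleftrightarrow>
     a * b * a = a \<and> b * a * b = b \<and> st (a * b) = a * b \<and> st (b * a) = b * a"

definition mp_invertible :: "('a::ring_1 \<Rightarrow> 'a) \<Rightarrow> 'a \<Rightarrow> bool" where
  "mp_invertible st a \<longleftrightarrow> (\<exists>b. mp_inverse st a b)"

text \<open>The (unique, when it exists) Moore-Penrose inverse.\<close>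
definition mp_dagger :: "('a::ring_1 \<Rightarrow> 'a) \<Rightarrow> 'a \<Rightarrow> 'a" where
  "mp_dagger st a = (THE b. mp_inverse st a b)"

end

theory Submission
  imports Defs
begin


locale sr =
  fixes st :: "'a::ring_1 \<Rightarrow> 'a"
  assumes inv: "involution st" and red: "star_reducing st"
begin

lemma st_st[simp]: "st (st a) = a" using inv unfolding involution_def by blast
lemma st_add[simp]: "st (a + b) = st a + st b" using inv unfolding involution_def by blast
lemma st_mult[simp]: "st (a * b) = st b * st a" using inv unfolding involution_def by blast

lemma st_one[simp]: "st 1 = 1"
proof -
  have "st 1 * a = a" for a
  proof -
    have "st (st a * 1) = st 1 * st (st a)" by (rule st_mult)
    thus ?thesis by simp
  qed
  from this[of 1] show ?thesis by simp
qed

lemma st_zero[simp]: "st 0 = 0"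
proof -
  have "st 0 = st 0 + st 0" using st_add[of 0 0] by simp
  thus ?thesis by simp
qed

lemma st_uminus[simp]: "st (- a) = - st a"
proof -
  have "st (-a) + st a = 0" using st_add[of "-a" a] by simp
  thus ?thesis by (simp add: eq_neg_iff_add_eq_0)
qed

lemma st_diff[simp]: "st (a - b) = st a - st b"
  using st_add[of a "-b"] by simp

lemma red': "st a * a = 0 \<Longrightarrow> a = 0" using red unfolding star_reducing_def by blast

lemma mp_unique:
  assumes "mp_inverse st a b" "mp_inverse st a c" shows "b = c"
proof -
  from assms have b1: "a*b*a = a" and b2: "b*a*b = b" and b3: "st b * st a = a*b"
    and b4: "st a * st b = b*a" and c1: "a*c*a = a" and c2: "c*a*c = c"
    and c3: "st c * st a = a*c" and c4: "st a * st c = c*a"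
    by (auto simp: mp_inverse_def)
  have "st (a*c*a) = st a" using c1 by simp
  hence s2: "st a * (st c * st a) = st a" by (simp add: mult.assoc)
  have "st (a*b*a) = st a" using b1 by simp
  hence s1: "st a * (st b * st a) = st a" by (simp add: mult.assoc)
  have "b = b*(a*b)" using b2 by (simp add: mult.assoc)
  also have "\<dots> = b * (st b * st a)" using b3 by simp
  also have "\<dots> = b * (st b * (st a * (st c * st a)))" using s2 by simp
  also have "\<dots> = b * ((st b * st a) * (st c * st a))" by (simp add: mult.assoc)
  also have "\<dots> = b * ((a*b)*(a*c))" using b3 c3 by simp
  also have "\<dots> = (b*a*b)*a*c" by (simp add: mult.assoc)
  also have "\<dots> = b*a*c" using b2 by simp
  finally have bb: "b = b*a*c" .
  have "c = (c*a)*c" using c2 by (simp add: mult.assoc)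
  also have "\<dots> = (st a * st c) * c" using c4 by simp
  also have "\<dots> = ((st a * (st b * st a)) * st c) * c" using s1 by simp
  also have "\<dots> = ((st a * st b) * (st a * st c)) * c" by (simp add: mult.assoc)
  also have "\<dots> = ((b*a) * (c*a)) * c" using b4 c4 by simp
  also have "\<dots> = b*a*(c*a*c)" by (simp add: mult.assoc)
  also have "\<dots> = b*a*c" using c2 by simp
  finally have cc: "c = b*a*c" .
  show ?thesis using bb cc by simp
qed

lemma mp_dagger_eq: "mp_inverse st a b \<Longrightarrow> mp_dagger st a = b"
  unfolding mp_dagger_def by (rule the_equality) (auto intro: mp_unique)

lemma mp_dagger_inv: "mp_invertible st a \<Longrightarrow> mp_inverse st a (mp_dagger st a)"
  unfolding mp_invertible_def using mp_dagger_eq by auto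

lemma mp_invI: "mp_inverse st a b \<Longrightarrow> mp_invertible st a"
  unfolding mp_invertible_def by blast

lemma mp_star: assumes "mp_inverse st a b" shows "mp_inverse st (st a) (st b)"
proof -
  from assms have b1: "a*b*a = a" and b2: "b*a*b = b" and b3: "st (a*b) = a*b"
    and b4: "st (b*a) = b*a" by (auto simp: mp_inverse_def)
  have "st (a*b*a) = st a" using b1 by simp
  hence 1: "st a * st b * st a = st a" by (simp add: mult.assoc)
  have "st (b*a*b) = st b" using b2 by simp
  hence 2: "st b * st a * st b = st b" by (simp add: mult.assoc)
  show ?thesis unfolding mp_inverse_def using 1 2 b3 b4 by simp
qed

lemma mp_invertible_star: "mp_invertible st (st a) \<longleftrightarrow> mp_invertible st a"
  unfolding mp_invertible_def using mp_star by (metis st_st)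

lemma mp_dagger_star: "mp_invertible st a \<Longrightarrow> mp_dagger st (st a) = st (mp_dagger st a)"
  by (intro mp_dagger_eq mp_star mp_dagger_inv)

lemma herm_dag: "st a = a \<Longrightarrow> mp_inverse st a b \<Longrightarrow> st b = b"
  using mp_star mp_unique by metis

lemma herm_comm: assumes "st a = a" "mp_inverse st a b" shows "a*b = b*a"
proof -
  have "st (a*b) = a*b" using assms by (simp add: mp_inverse_def)
  thus ?thesis using assms herm_dag by simp
qed

lemma corner:
  assumes m: "mp_inverse st a b" and e: "st e = e" "a*e = a" "e*a = a"
  shows "b*e = b" "e*b = b"
proof -
  from m have b2: "b*a*b = b" and b3: "st (a*b) = a*b"
    and b4: "st (b*a) = b*a" by (auto simp: mp_inverse_def)
  have ea: "st a * e = st a" by (metis e(1) e(3) st_mult)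
  have ae: "e * st a = st a" by (metis e(1) e(2) st_mult)
  have x1: "b = b * (st b * st a)" using b2 b3 by (simp add: mult.assoc)
  have "b * e = b * (st b * (st a * e))" using x1 by (metis mult.assoc)
  thus "b*e = b" using ea x1 by simp
  have x2: "b = (st a * st b) * b" using b2 b4 by simp
  have "e * b = (e * st a) * st b * b" using x2 by (metis mult.assoc)
  thus "e*b = b" using ae x2 by simp
qed


lemma mp_facts: assumes "mp_inverse st a b"
  shows "a*(b*a) = a" "a*(b*(a*x)) = a*x" "b*(a*b) = b" "b*(a*(b*x)) = b*x"
    "st b * st a = a*b" "st b * (st a * x) = a*(b*x)"
    "st a * st b = b*a" "st a * (st b * x) = b*(a*x)"
proof -
  from assms have b1: "a*b*a = a" and b2: "b*a*b = b" and b3: "st (a*b) = a*b"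
    and b4: "st (b*a) = b*a" by (auto simp: mp_inverse_def)
  show "a*(b*a) = a" "a*(b*(a*x)) = a*x" "b*(a*b) = b" "b*(a*(b*x)) = b*x"
    using b1 b2 by (metis mult.assoc)+
  show "st b * st a = a*b" "st a * st b = b*a" using b3 b4 by simp_all
  thus "st b * (st a * x) = a*(b*x)" "st a * (st b * x) = b*(a*x)"
    by (metis mult.assoc)+
qed

lemma L3a: assumes m: "mp_inverse st a b" shows "mp_inverse st (a * st a) (st b * b)"
proof -
  note F = mp_facts[OF m]
  have k: "st b*(b*(a*st a)) = a*b"
  proof -
    have "st b*(b*(a*st a)) = st b*((b*a)*st a)" by (simp add: mult.assoc)
    also have "\<dots> = st b*((st a*st b)*st a)" using F by simp
    also have "\<dots> = (st b*st a)*(st b*st a)" by (simp add: mult.assoc)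
    also have "\<dots> = a*(b*(a*b))" using F by (simp add: mult.assoc)
    also have "\<dots> = a*b" using F by simp
    finally show ?thesis .
  qed
  show ?thesis unfolding mp_inverse_def
  proof (intro conjI)
    show "a * st a * (st b * b) * (a * st a) = a * st a" using F by (simp add: mult.assoc)
    show "st b * b * (a * st a) * (st b * b) = st b * b" using F by (simp add: mult.assoc)
    show "st (a * st a * (st b * b)) = a * st a * (st b * b)" using F k by (simp add: mult.assoc)
    show "st (st b * b * (a * st a)) = st b * b * (a * st a)" using F k by (simp add: mult.assoc)
  qed
qed

lemma L3b: assumes m: "mp_inverse st (a * st a) v"
  shows "a * st a * v * a = a" "mp_inverse st a (st a * v)"
proof -
  define u where "u = a * st a"
  have su: "st u = u" unfolding u_def by simp
  have m': "mp_inverse st u v" using m u_def by simp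
  have sv: "st v = v" using herm_dag[OF su m'] .
  have uvh: "st (u*v) = u*v" using m' by (simp add: mp_inverse_def)
  hence uvh': "v * u = u * v" using su sv by simp
  have uvu: "u*v*u = u" using m' by (simp add: mp_inverse_def)
  define y where "y = st a - st a * (u*v)"
  have sy: "st y = a - u*v*a" unfolding y_def using uvh by (simp add: mult.assoc)
  have "st y * y = (a - u*v*a)*(st a - st a*(u*v))" using sy y_def by simp
  also have "\<dots> = a*st a - a*st a*(u*v) - u*v*(a*st a) + u*v*(a*st a)*(u*v)"
    by (simp add: algebra_simps)
  also have "\<dots> = u - u*(u*v) - u*v*u + u*v*u*(u*v)" unfolding u_def by simp
  also have "\<dots> = 0" using uvu by (simp add: mult.assoc)
  finally have "y = 0" using red' by blast
  hence "st y = 0" by simp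
  hence e: "u*v*a = a" using sy by simp
  thus "a * st a * v * a = a" using u_def by simp
  have vuv: "v*u*v = v" using m' by (simp add: mp_inverse_def)
  show "mp_inverse st a (st a * v)" unfolding mp_inverse_def
  proof (intro conjI)
    show "a * (st a * v) * a = a" using e u_def by (simp add: mult.assoc)
    show "st a * v * a * (st a * v) = st a * v"
    proof -
      have "st a * v * a * (st a * v) = st a * (v*u*v)" unfolding u_def by (simp add: mult.assoc)
      thus ?thesis using vuv by simp
    qed
    show "st (a * (st a * v)) = a * (st a * v)"
      using uvh u_def by (simp add: mult.assoc)
    show "st (st a * v * a) = st a * v * a" using sv by (simp add: mult.assoc)
  qed
qed

lemma L3: "mp_invertible st a \<longleftrightarrow> mp_invertible st (a * st a)"
  using L3a L3b mp_invI unfolding mp_invertible_def by blast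

lemma L3': "mp_invertible st a \<longleftrightarrow> mp_invertible st (st a * a)"
  using L3[of "st a"] mp_invertible_star by simp

lemma L7: assumes "a*y1*a = a" "st (y1*a) = y1*a" "a*y2*a = a" "st (a*y2) = a*y2"
  shows "mp_inverse st a (y1*a*y2)"
proof -
  have 1: "a*(y1*(a*x)) = a*x" for x using assms(1) by (metis mult.assoc)
  have 2: "a*(y2*(a*x)) = a*x" for x using assms(3) by (metis mult.assoc)
  have 3: "a*(y1*a) = a" "a*(y2*a) = a" using assms by (simp_all add: mult.assoc)
  show ?thesis unfolding mp_inverse_def using assms 1 2 3 by (simp add: mult.assoc)
qed

lemma herm14: assumes "st d = d" "d*y*d = d" "st (y*d) = y*d"
  shows "mp_inverse st d (y*d*st y)"
proof (rule L7)
  show "d*y*d = d" "st (y*d) = y*d" by fact+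
  have "st (d*y*d) = st d" using assms(2) by simp
  thus "d * st y * d = d" using assms(1) by (simp add: mult.assoc)
  show "st (d * st y) = d * st y" using assms by simp
qed

lemma L4: assumes sh: "st s = s" and m: "mp_inverse st s x" and pp: "p*p = p" and sp: "st p = p"
  and ps: "p*s = s*p"
  shows "p*x = x*p" "mp_inverse st (s*p) (x*p)"
proof -
  note F = mp_facts[OF m]
  have xs: "s*x = x*s" using herm_comm[OF sh m] .
  have sx: "st x = x" using herm_dag[OF sh m] .
  have ps': "p*(s*y) = s*(p*y)" for y using ps by (metis mult.assoc)
  define e where "e = s*x"
  have se: "st e = e" unfolding e_def using xs sh sx by simp
  have "p*e = e*p*e" unfolding e_def
  proof -
    have "s*x*p*(s*x) = s*(x*(s*(p*x)))" using ps' by (simp add: mult.assoc)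
    also have "\<dots> = s*(p*x)" using F by simp
    finally show "p*(s*x) = s*x*p*(s*x)" using ps' by simp
  qed
  note pe = this
  have 1: "st (p*e) = e*p" using se sp by simp
  have 2: "st (e*p*e) = e*p*e" using se sp by (simp add: mult.assoc)
  have ep: "e*p = p*e" by (metis 1 2 pe)
  have xe: "x*e = x" unfolding e_def using F by (simp add: mult.assoc)
  have ex: "e*x = x" unfolding e_def using xs F by (metis mult.assoc)
  have "x*p = x*e*p" using xe by simp
  also have "\<dots> = x*(p*e)" using ep by (simp add: mult.assoc)
  also have "\<dots> = x*(s*(p*x))" unfolding e_def using ps' by simp
  also have "\<dots> = e*(p*x)" unfolding e_def using xs by (simp add: mult.assoc)
  also have "\<dots> = p*(e*x)" using ep by (metis mult.assoc)
  also have "\<dots> = p*x" using ex by simp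
  finally show px: "p*x = x*p" by simp
  have px': "p*(x*y) = x*(p*y)" for y using px by (metis mult.assoc)
  have pp': "p*(p*y) = p*y" for y using pp by (metis mult.assoc)
  have xsp: "x*(s*p) = s*(x*p)" using xs by (metis mult.assoc)
  have F1: "s*(x*(s*y)) = s*y" "x*(s*(x*y)) = x*y" for y using F by simp_all
  show "mp_inverse st (s*p) (x*p)" unfolding mp_inverse_def
  proof (intro conjI)
    show "s * p * (x * p) * (s * p) = s * p"
      using sh sx sp ps' px px' pp pp' F1 by (simp add: mult.assoc ps)
    show "x * p * (s * p) * (x * p) = x * p"
      using sh sx sp ps' px px' pp pp' F1 by (simp add: mult.assoc ps)
    show "st (s * p * (x * p)) = s * p * (x * p)"
      using sh sx sp ps' px px' pp pp' xsp by (simp add: mult.assoc ps)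
    show "st (x * p * (s * p)) = x * p * (s * p)"
      using sh sx sp ps' px px' pp pp' xsp by (simp add: mult.assoc ps)
  qed
qed

lemma L5: assumes ma: "mp_inverse st a x" and mb: "mp_inverse st b y"
  and "a*e = a" "e*x = x" "e*b = 0" "b*e = 0" "e*y = 0" "y*e = 0" "x*e = x" "e*a = a"
  shows "mp_inverse st (a+b) (x+y)"
proof -
  have z1: "a*y = 0" using assms by (metis mult.assoc mult_zero_right)
  have z2: "b*x = 0" using assms by (metis mult.assoc mult_zero_left)
  have z3: "x*b = 0" using assms by (metis mult.assoc mult_zero_right)
  have z4: "y*a = 0" using assms by (metis mult.assoc mult_zero_left)
  have z: "a*(y*w) = 0" "b*(x*w) = 0" "x*(b*w) = 0" "y*(a*w) = 0" for w
    using z1 z2 z3 z4 by (metis mult.assoc mult_zero_left)+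
  show ?thesis using ma mb z z1 z2 z3 z4 unfolding mp_inverse_def
    by (simp add: algebra_simps)
qed

end



context sr begin

lemma proj_alg:
  fixes p q :: 'a
  assumes pp: "p*p = p" and qq: "q*q = q"
  defines "G \<equiv> 1 - p*q*(1-p)" and "H \<equiv> 1 + p*q*(1-p)" and "D \<equiv> 1 - p*q*p"
  shows "G*H = 1" "H*G = 1" "1 - p*q = G*D" "D = H*(1 - p*q)"
    "D = p*(1-q)*p + (1-p)" "(1 - p*q)*p = p*(1-q)*p" "D*p = p*(1-q)*p" "p*D = D*p"
    "p*(1-q)*((1-q)*p) = p*(1-q)*p"
proof -
  have pp': "p*(p*y) = p*y" for y using pp by (metis mult.assoc)
  have qq': "q*(q*y) = q*y" for y using qq by (metis mult.assoc)
  show "G*H = 1" "H*G = 1" "1 - p*q = G*D" "D = H*(1 - p*q)"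
    "D = p*(1-q)*p + (1-p)" "(1 - p*q)*p = p*(1-q)*p" "D*p = p*(1-q)*p" "p*D = D*p"
    "p*(1-q)*((1-q)*p) = p*(1-q)*p"
    unfolding G_def H_def D_def using pp pp' qq qq' by (simp_all add: algebra_simps)
qed


lemma proj_inv: "p*p = p \<Longrightarrow> st p = p \<Longrightarrow> mp_inverse st p p"
  unfolding mp_inverse_def by (simp add: mult.assoc)

lemma C3:
  assumes pp: "p*p = p" and sp: "st p = p" and sq: "st q = q"
    and sh: "st s = s" and ps: "p*s = s*p" and sps: "s*p = p*(1-q)*p"
    and m: "mp_invertible st s"
  shows "mp_invertible st (p*(1-q)*p)"
proof -
  have "mp_inverse st (s*p) (mp_dagger st s * p)"
    using L4(2)[OF sh mp_dagger_inv[OF m] pp sp ps] .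
  thus ?thesis using sps mp_invI by metis
qed

lemma C1:
  assumes pp: "p*p = p" and sp: "st p = p" and qq: "q*q = q" and sq: "st q = q"
    and m: "mp_invertible st (1 - p*q)"
  shows "mp_invertible st (p*(1-q)*p)"
proof -
  define G where "G = 1 - p*q*(1-p)"
  define H where "H = 1 + p*q*(1-p)"
  define D where "D = 1 - p*q*p"
  define c where "c = 1 - p*q"
  note A = proj_alg[OF pp qq, folded G_def H_def D_def c_def]
  define x where "x = mp_dagger st c"
  have mx: "mp_inverse st c x" using mp_dagger_inv[OF m] unfolding x_def c_def .
  hence cxc: "c*x*c = c" and xch: "st (x*c) = x*c" by (auto simp: mp_inverse_def)
  have sD: "st D = D" unfolding D_def using sp sq by (simp add: mult.assoc)
  have "D*(x*G)*D = H*(c*x*(G*H)*c)" using A(4) by (simp add: mult.assoc)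
  also have "\<dots> = D" using A(1,4) cxc by simp
  finally have 1: "D*(x*G)*D = D" .
  have "x*G*D = x*((G*H)*c)" using A(4) by (simp add: mult.assoc)
  hence 2: "x*G*D = x*c" using A(1) by simp
  have "mp_inverse st D (x*G*D*st (x*G))" by (rule herm14[OF sD 1]) (use 2 xch in simp)
  hence mD: "mp_invertible st D" by (rule mp_invI)
  show ?thesis by (rule C3[OF pp sp sq sD A(8) A(7) mD])
qed

lemma Dlemma:
  assumes pp: "p*p = p" and sp: "st p = p" and qq: "q*q = q" and sq: "st q = q"
    and mv: "mp_inverse st (p*(1-q)*p) v"
  shows "v*p = v" "p*v = v" "mp_inverse st (1 - p*q*p) (v + (1-p))"
    "p*(1-q)*p*v*(p*(1-q)) = p*(1-q)" "mp_inverse st (p*(1-q)) ((1-q)*p*v)"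
proof -
  note A = proj_alg[OF pp qq]
  have pp': "p*(p*y) = p*y" for y using pp by (metis mult.assoc)
  have s1: "p*(1-q)*p*p = p*(1-q)*p" "p*(p*(1-q)*p) = p*(1-q)*p" using pp pp'
    by (simp_all add: algebra_simps)
  show vp: "v*p = v" "p*v = v" using corner[OF mv sp s1] by simp_all
  have m1: "mp_inverse st (1-p) (1-p)" using proj_inv[of "1-p"] pp sp by (simp add: algebra_simps)
  have "mp_inverse st (p*(1-q)*p + (1-p)) (v + (1-p))"
    apply (rule L5[OF mv m1, where e=p])
    using pp pp' s1 vp by (simp_all add: algebra_simps)
  thus "mp_inverse st (1 - p*q*p) (v + (1-p))" by (simp only: A(5))
  have mv': "mp_inverse st (p*(1-q) * st (p*(1-q))) v" using mv A(9) sp sq by simp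
  show "p*(1-q)*p*v*(p*(1-q)) = p*(1-q)" using L3b(1)[OF mv'] A(9) sp sq by simp
  show "mp_inverse st (p*(1-q)) ((1-q)*p*v)" using L3b(2)[OF mv'] sp sq by (simp add: mult.assoc)
qed


lemma kerproj:
  assumes m: "mp_inverse st c x" and f: "st f = f" "c*f = c" "f = r*c"
  shows "x*c = f"
proof -
  from m have cxc: "c*x*c = c" and h: "st (x*c) = x*c" by (auto simp: mp_inverse_def)
  have 1: "f = f*(x*c)" using f(3) cxc by (metis mult.assoc)
  have 2: "x*c = (x*c)*f" using f(2) by (metis mult.assoc)
  have "f = st (f*(x*c))" using 1 f(1) by simp
  also have "\<dots> = (x*c)*f" using h f(1) by simp
  finally show ?thesis using 2 by simp
qed

lemma C2:
  assumes pp: "p*p = p" and sp: "st p = p" and qq: "q*q = q" and sq: "st q = q"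
    and mv: "mp_inverse st (p*(1-q)*p) v"
  shows "mp_invertible st (1 - p*q)"
proof -
  define G where "G = 1 - p*q*(1-p)"
  define H where "H = 1 + p*q*(1-p)"
  define D where "D = 1 - p*q*p"
  define c where "c = 1 - p*q"
  define a where "a = p*(1-q)"
  define Dd where "Dd = v + (1-p)"
  define N where "N = v*a*(1-p)"
  note A = proj_alg[OF pp qq, folded G_def H_def D_def c_def]
  note DL = Dlemma[OF pp sp qq sq mv, folded D_def Dd_def a_def]
  have mD: "mp_inverse st D Dd" using DL(3) .
  hence DDD: "D*Dd*D = D" and hDd: "st (Dd*D) = Dd*D" and hdD: "st (D*Dd) = D*Dd"
    by (auto simp: mp_inverse_def)
  have pv: "(1-p)*v = 0" using DL(2) by (simp add: algebra_simps)
  have NN: "N*N = 0" unfolding N_def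
  proof -
    have "v*a*(1-p)*(v*a*(1-p)) = v*a*((1-p)*v)*a*(1-p)" by (simp add: mult.assoc)
    thus "v*a*(1-p)*(v*a*(1-p)) = 0" using pv by simp
  qed
  have KK: "(1+N)*(1-N) = 1" using NN by (simp add: algebra_simps)
  have "D*v = (p*(1-q)*p + (1-p))*v" using A(5) by simp
  also have "\<dots> = p*(1-q)*p*v + (1-p)*v" by (rule distrib_right)
  finally have Dv: "D*v = p*(1-q)*p*v" using pv by simp
  have "D*N = (D*v)*a*(1-p)" unfolding N_def by (simp add: mult.assoc)
  also have "\<dots> = a*(1-p)" using Dv DL(4) a_def by simp
  finally have DN: "D*N = a*(1-p)" .
  have "D + a*(1-p) = c" unfolding D_def a_def c_def using pp
    by (simp add: algebra_simps)
  hence cDK: "c = D*(1+N)" using DN by (simp add: distrib_left)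
  have cGD: "c = G*D" using A(3) .
  show ?thesis unfolding c_def[symmetric]
  proof (rule mp_invI, rule L7)
    show "c*(Dd*H)*c = c"
    proof -
      have "(G*D)*(Dd*H)*(G*D) = G*(D*Dd*(H*G)*D)" by (simp add: mult.assoc)
      thus ?thesis using cGD A(2) DDD by simp
    qed
    have "Dd*H*c = Dd*(H*G)*D" using cGD by (simp add: mult.assoc)
    hence "Dd*H*c = Dd*D" using A(2) by simp
    thus "st (Dd*H*c) = Dd*H*c" using hDd by simp
    show "c*((1-N)*Dd)*c = c"
    proof -
      have "(D*(1+N))*((1-N)*Dd)*(D*(1+N)) = (D*((1+N)*(1-N))*Dd*D)*(1+N)" by (simp add: mult.assoc)
      thus ?thesis using cDK KK DDD by simp
    qed
    have "c*((1-N)*Dd) = D*((1+N)*(1-N))*Dd" using cDK by (simp add: mult.assoc)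
    hence "c*((1-N)*Dd) = D*Dd" using KK by simp
    thus "st (c*((1-N)*Dd)) = c*((1-N)*Dd)" using hdD by simp
  qed
qed


lemma Mlemma:
  assumes pp: "p*p = p" and sp: "st p = p" and qq: "q*q = q" and sq: "st q = q"
    and mA: "mp_invertible st (p*(1-q)*p)" and mB: "mp_invertible st ((1-p)*q*(1-p))"
  defines "T \<equiv> p*(1-q)*p * mp_dagger st (p*(1-q)*p)"
  shows "mp_dagger st (1 - p*q) * (p*(1-q)*p) = T"
    "p*(1-q) * mp_dagger st (p*(1-q)*p) = T"
    "p*(1-q)*p * mp_dagger st (1 - q*p) = T"
    "p * mp_dagger st (p*(1-q)) = T"
    "mp_dagger st ((1-q)*p) * p = T"
    "p * mp_dagger st (p - q) * p = T"
proof -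
  define s2 where "s2 = p*(1-q)*p"
  define v where "v = mp_dagger st s2"
  have mv: "mp_inverse st s2 v" unfolding v_def s2_def using mp_dagger_inv[OF mA] .
  note DL = Dlemma[OF pp sp qq sq mv[unfolded s2_def]]
  have ss2: "st s2 = s2" unfolding s2_def using sp sq by (simp add: mult.assoc)
  have vs: "s2*v = v*s2" using herm_comm[OF ss2 mv] .
  have sv: "st v = v" using herm_dag[OF ss2 mv] .
  have T: "T = s2*v" unfolding T_def s2_def v_def ..
  have pp': "p*(p*y) = p*y" for y using pp by (metis mult.assoc)
  have "p*(1-q)*v = p*(1-q)*(p*v)" using DL(2) by simp
  thus "p*(1-q) * mp_dagger st (p*(1-q)*p) = T" unfolding T s2_def v_def by (simp add: mult.assoc)
  have d4: "mp_dagger st (p*(1-q)) = (1-q)*p*v" using mp_dagger_eq[OF DL(5)] .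
  show "p * mp_dagger st (p*(1-q)) = T" unfolding d4 T s2_def by (simp add: mult.assoc)
  have "mp_dagger st (st (p*(1-q))) = st (mp_dagger st (p*(1-q)))"
    using mp_dagger_star mp_invI[OF DL(5)] by blast
  hence d5: "mp_dagger st ((1-q)*p) = v*p*(1-q)" using d4 sp sq sv by (simp add: mult.assoc)
  have "v*p*(1-q)*p = v*s2" unfolding s2_def by (simp add: mult.assoc)
  thus "mp_dagger st ((1-q)*p) * p = T" unfolding d5 T using vs by simp
  define w where "w = mp_dagger st ((1-p)*q*(1-p))"
  have mw: "mp_inverse st ((1-p)*q*(1-p)) w" unfolding w_def using mp_dagger_inv[OF mB] .
  have spb: "st (1-p) = 1-p" using sp by simp
  have c1: "(1-p)*q*(1-p)*(1-p) = (1-p)*q*(1-p)" "(1-p)*((1-p)*q*(1-p)) = (1-p)*q*(1-p)"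
    using pp pp' by (simp_all add: algebra_simps)
  note wc = corner[OF mw spb c1]
  have pw: "p*w = 0" "w*p = 0"
  proof -
    have "p*w = (p*(1-p))*w" using wc by (metis mult.assoc)
    thus "p*w = 0" using pp by (simp add: algebra_simps)
    have "w*p = w*((1-p)*p)" using wc by (metis mult.assoc)
    thus "w*p = 0" using pp by (simp add: algebra_simps)
  qed
  have "mp_inverse st (s2 + (1-p)*q*(1-p)) (v + w)"
    apply (rule L5[OF mv mw, where e=p])
    unfolding s2_def using pp pp' DL(1,2) pw by (simp_all add: algebra_simps)
  moreover have "(p-q)*st (p-q) = s2 + (1-p)*q*(1-p)" unfolding s2_def using sp sq pp pp' qq
    by (simp add: algebra_simps)
  ultimately have "mp_inverse st ((p-q)*st (p-q)) (v+w)" by simp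
  hence "mp_inverse st (p-q) ((p-q)*(v+w))" using L3b(2) sp sq by fastforce
  hence d6: "mp_dagger st (p-q) = (p-q)*(v+w)" by (rule mp_dagger_eq)
  have "p*((p-q)*(v+w))*p = p*(p-q)*(v*p) + p*(p-q)*(w*p)" by (simp add: algebra_simps)
  also have "\<dots> = p*(1-q)*(p*v)" using DL(1,2) pw pp by (simp add: algebra_simps)
  finally show "p * mp_dagger st (p - q) * p = T" unfolding d6 T s2_def by (simp add: mult.assoc)
  define G where "G = 1 - p*q*(1-p)"
  define H where "H = 1 + p*q*(1-p)"
  define D where "D = 1 - p*q*p"
  define c where "c = 1 - p*q"
  note A = proj_alg[OF pp qq, folded G_def H_def D_def c_def]
  have mc: "mp_invertible st c" unfolding c_def using C2[OF pp sp qq sq mv[unfolded s2_def]] .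
  define x where "x = mp_dagger st c"
  have mx: "mp_inverse st c x" unfolding x_def using mp_dagger_inv[OF mc] .
  have mD: "mp_inverse st D (v + (1-p))" unfolding D_def using DL(3) .
  hence DDD: "D*(v + (1-p))*D = D" and hDd: "st ((v + (1-p))*D) = (v + (1-p))*D"
    by (auto simp: mp_inverse_def)
  have xc: "x*c = (v + (1-p))*D"
  proof (rule kerproj[OF mx hDd])
    show "c * ((v + (1-p))*D) = c" using A(3) DDD by (simp add: mult.assoc)
    show "(v + (1-p))*D = ((v + (1-p))*H)*c" using A(4) by (simp add: mult.assoc)
  qed
  have ps2: "(1-p)*s2 = 0" unfolding s2_def using pp pp' by (simp add: algebra_simps)
  have "x*s2 = x*(c*p)" using A(6) s2_def by simp
  also have "\<dots> = (v + (1-p))*(D*p)" by (metis xc mult.assoc)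
  also have "\<dots> = v*s2 + (1-p)*s2" using A(7) s2_def by (simp add: distrib_right)
  finally have xs2: "x*s2 = T" using ps2 T vs by simp
  show "mp_dagger st (1 - p*q) * (p*(1-q)*p) = T" using xs2 x_def c_def s2_def by simp
  have "mp_dagger st (st c) = st x" unfolding x_def using mp_dagger_star[OF mc] .
  hence d3: "mp_dagger st (1 - q*p) = st x" unfolding c_def using sp sq by simp
  have "s2 * st x = st (x*s2)" using ss2 by simp
  also have "\<dots> = T" using xs2 T vs sv ss2 by simp
  finally show "p*(1-q)*p * mp_dagger st (1 - q*p) = T" using d3 s2_def by simp
qed


lemma projc: "p*p = p \<Longrightarrow> st p = p \<Longrightarrow> (1-p)*(1-p) = 1-p \<and> st (1-p) = 1-p"
  by (simp add: algebra_simps)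

lemma E1: assumes "p*p = p" "st p = p" "q*q = q" "st q = q"
  shows "mp_invertible st (p*(1-q)) \<longleftrightarrow> mp_invertible st (p*(1-q)*p)"
  using L3[of "p*(1-q)"] proj_alg(9)[of p q] assms by simp

lemma E2: assumes "st p = p" "st q = q"
  shows "mp_invertible st ((1-q)*p) \<longleftrightarrow> mp_invertible st (p*(1-q))"
  using mp_invertible_star[of "p*(1-q)"] assms by simp

lemma E3: assumes "p*p = p" "st p = p" "q*q = q" "st q = q"
  shows "mp_invertible st ((1-q)*p*(1-q)) \<longleftrightarrow> mp_invertible st ((1-q)*p)"
proof -
  have pp': "p*(p*y) = p*y" for y using assms(1) by (metis mult.assoc)
  have "(1-q)*p*st ((1-q)*p) = (1-q)*p*(1-q)" using assms pp' by (simp add: mult.assoc)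
  thus ?thesis using L3[of "(1-q)*p"] by simp
qed

lemma E4: assumes "p*p = p" "st p = p" "q*q = q" "st q = q"
  shows "mp_invertible st (1 - p*q) \<longleftrightarrow> mp_invertible st (p*(1-q)*p)"
  using C1[OF assms] C2[OF assms] mp_dagger_inv by blast

lemma E5: assumes "st p = p" "st q = q"
  shows "mp_invertible st (1 - q*p) \<longleftrightarrow> mp_invertible st (1 - p*q)"
  using mp_invertible_star[of "1 - p*q"] assms by simp

lemma E6: assumes "p*p = p" "st p = p" "q*q = q" "st q = q"
    and "mp_invertible st (1 - p*q*p)"
  shows "mp_invertible st (p*(1-q)*p)"
proof -
  note A = proj_alg[OF assms(1,3)]
  have "st (1 - p*q*p) = 1 - p*q*p" using assms by (simp add: mult.assoc)
  thus ?thesis using C3[OF assms(1,2,4) _ A(8) A(7) assms(5)] by simp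
qed

lemma E7: assumes pp: "p*p = p" and sp: "st p = p" and qq: "q*q = q" and sq: "st q = q"
    and m: "mp_invertible st (p - q)"
  shows "mp_invertible st (p*(1-q)*p)"
proof -
  have pp': "p*(p*y) = p*y" for y using pp by (metis mult.assoc)
  have qq': "q*(q*y) = q*y" for y using qq by (metis mult.assoc)
  have "mp_invertible st ((p-q)*st (p-q))" using m L3 by blast
  hence m2: "mp_invertible st ((p-q)*(p-q))" using sp sq by simp
  show ?thesis
  proof (rule C3[OF pp sp sq _ _ _ m2])
    show "st ((p-q)*(p-q)) = (p-q)*(p-q)" using sp sq by simp
    show "p*((p-q)*(p-q)) = (p-q)*(p-q)*p" using pp pp' qq qq' by (simp add: algebra_simps)
    show "(p-q)*(p-q)*p = p*(1-q)*p" using pp pp' qq qq' by (simp add: algebra_simps)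
  qed
qed

lemma Bform: assumes "p*p = p" "st p = p" "q*q = q" "st q = q"
  shows "mp_invertible st ((1-q)*p*(1-q)) \<longleftrightarrow> mp_invertible st (p*(1-q)*p)"
  using E1[OF assms] E2[OF assms(2,4)] E3[OF assms] by blast

lemma Swap: assumes "p*p = p" "st p = p" "q*q = q" "st q = q"
    and "mp_invertible st (p*(1-q)*p)"
  shows "mp_invertible st (q*(1-p)*q)"
  using E4[OF assms(1-4)] E5[OF assms(2,4)] E4[OF assms(3,4,1,2)] assms(5) by blast

end



theorem corollary2p9:
  fixes st :: "'a::ring_1 \<Rightarrow> 'a" and p q :: 'a
  assumes "involution st" and "star_reducing st"
    and "projection st p" and "projection st q"
    and "mp_invertible st (1 - p*q) \<or> mp_invertible st (1 - p*q*p) \<or>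
         mp_invertible st (p - p*q*p) \<or> mp_invertible st (p - p*q) \<or>
         mp_invertible st (p - q*p) \<or> mp_invertible st (1 - q*p) \<or>
         mp_invertible st (1 - q*p*q) \<or> mp_invertible st (q - q*p*q) \<or>
         mp_invertible st (q - q*p) \<or> mp_invertible st (q - p*q) \<or>
         mp_invertible st (p + q - p*q) \<or> mp_invertible st (p + (1-p)*q*(1-p)) \<or>
         mp_invertible st ((1-p)*q*(1-p)) \<or> mp_invertible st (p + q - q*p) \<or>
         mp_invertible st (q + (1-q)*p*(1-q)) \<or> mp_invertible st ((1-q)*p*(1-q)) \<or>
         mp_invertible st (p*(1-q)) \<or> mp_invertible st (p - q) \<or>
         mp_invertible st ((1-p)*q)"
  shows "(mp_dagger st (1 - p*q) * (p*(1-q)*p) = p*(1-q) * mp_dagger st (p*(1-q)*p)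
       \<and> p*(1-q) * mp_dagger st (p*(1-q)*p) = p*(1-q)*p * mp_dagger st (1 - q*p)
       \<and> p*(1-q)*p * mp_dagger st (1 - q*p) = p * mp_dagger st (p*(1-q))
       \<and> p * mp_dagger st (p*(1-q)) = mp_dagger st ((1-q)*p) * p
       \<and> mp_dagger st ((1-q)*p) * p = p * mp_dagger st (p - q) * p)
       \<and> (mp_dagger st (p + (1-p)*q) * ((1-p)*q*(1-p)) = mp_dagger st (q + p*(1-q)) * ((1-p)*q*(1-p))
       \<and> mp_dagger st (q + p*(1-q)) * ((1-p)*q*(1-p)) = (1-p)*q * mp_dagger st ((1-p)*q*(1-p))
       \<and> (1-p)*q * mp_dagger st ((1-p)*q*(1-p)) = (1-p)*q*(1-p) * mp_dagger st (p + q*(1-p))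
       \<and> (1-p)*q*(1-p) * mp_dagger st (p + q*(1-p)) = (1-p)*q*(1-p) * mp_dagger st (q + (1-q)*p)
       \<and> (1-p)*q*(1-p) * mp_dagger st (q + (1-q)*p) = (1-p) * mp_dagger st ((1-p)*q)
       \<and> (1-p) * mp_dagger st ((1-p)*q) = mp_dagger st (q*(1-p)) * (1-p)
       \<and> mp_dagger st (q*(1-p)) * (1-p) = (1-p) * mp_dagger st (q - p) * (1-p))"
proof -
  interpret sr st using assms(1,2) by unfold_locales
  have pp: "p*p = p" and sp: "st p = p" using assms(3) unfolding projection_def by auto
  have qq: "q*q = q" and sq: "st q = q" using assms(4) unfolding projection_def by auto
  have pp': "p*(p*y) = p*y" for y using pp by (metis mult.assoc)
  have qq': "q*(q*y) = q*y" for y using qq by (metis mult.assoc)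
  have pb: "(1-p)*(1-p) = 1-p" "st (1-p) = 1-p" using projc[OF pp sp] by auto
  have qb: "(1-q)*(1-q) = 1-q" "st (1-q) = 1-q" using projc[OF qq sq] by auto
  note P = pp sp qq sq
  note Q = qq sq pp sp
  note Pb = pb qb
  note Qb = qb pb
  have Abar: "mp_invertible st ((1-p)*(1-(1-q))*(1-p)) \<Longrightarrow> mp_invertible st (q*(1-p)*q)"
    using Bform[OF Q] by simp
  have Abar2: "mp_invertible st ((1-q)*(1-(1-p))*(1-q)) \<Longrightarrow> mp_invertible st (p*(1-q)*p)"
    using Bform[OF P] by simp
  have SwQ: "mp_invertible st (q*(1-p)*q) \<Longrightarrow> mp_invertible st (p*(1-q)*p)"
    using Swap[OF Q] by blast
  have Apq: "mp_invertible st (p*(1-q)*p)"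
    using assms(5)
  proof (elim disjE)
    assume "mp_invertible st (1 - p*q)" thus ?thesis using E4[OF P] by blast
  next
    assume "mp_invertible st (1 - p*q*p)" thus ?thesis using E6[OF P] by blast
  next
    assume "mp_invertible st (p - p*q*p)"
    moreover have "p - p*q*p = p*(1-q)*p" using pp pp' by (simp add: algebra_simps)
    ultimately show ?thesis by simp
  next
    assume "mp_invertible st (p - p*q)"
    moreover have "p - p*q = p*(1-q)" by (simp add: algebra_simps)
    ultimately show ?thesis using E1[OF P] by simp
  next
    assume "mp_invertible st (p - q*p)"
    moreover have "p - q*p = (1-q)*p" by (simp add: algebra_simps)
    ultimately show ?thesis using E1[OF P] E2[OF sp sq] by simp
  next
    assume "mp_invertible st (1 - q*p)" thus ?thesis using E4[OF P] E5[OF sp sq] by blast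
  next
    assume "mp_invertible st (1 - q*p*q)" thus ?thesis using E6[OF Q] SwQ by blast
  next
    assume "mp_invertible st (q - q*p*q)"
    moreover have "q - q*p*q = q*(1-p)*q" using qq qq' by (simp add: algebra_simps)
    ultimately show ?thesis using SwQ by simp
  next
    assume "mp_invertible st (q - q*p)"
    moreover have "q - q*p = q*(1-p)" by (simp add: algebra_simps)
    ultimately show ?thesis using E1[OF Q] SwQ by simp
  next
    assume "mp_invertible st (q - p*q)"
    moreover have "q - p*q = (1-p)*q" by (simp add: algebra_simps)
    ultimately show ?thesis using E1[OF Q] E2[OF sq sp] SwQ by simp
  next
    assume "mp_invertible st (p + q - p*q)"
    moreover have "p + q - p*q = 1 - (1-p)*(1-q)" by (simp add: algebra_simps)
    ultimately show ?thesis using E4[OF Pb] Abar SwQ by simp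
  next
    assume "mp_invertible st (p + (1-p)*q*(1-p))"
    moreover have "p + (1-p)*q*(1-p) = 1 - (1-p)*(1-q)*(1-p)" using pp pp' by (simp add: algebra_simps)
    ultimately show ?thesis using E6[OF Pb] Abar SwQ by simp
  next
    assume "mp_invertible st ((1-p)*q*(1-p))" thus ?thesis using Bform[OF Q] SwQ by blast
  next
    assume "mp_invertible st (p + q - q*p)"
    moreover have "p + q - q*p = 1 - (1-q)*(1-p)" by (simp add: algebra_simps)
    ultimately show ?thesis using E4[OF Pb] E5[OF Pb(2,4)] Abar SwQ by simp
  next
    assume "mp_invertible st (q + (1-q)*p*(1-q))"
    moreover have "q + (1-q)*p*(1-q) = 1 - (1-q)*(1-p)*(1-q)" using qq qq' by (simp add: algebra_simps)
    ultimately show ?thesis using E6[OF Qb] Abar2 by simp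
  next
    assume "mp_invertible st ((1-q)*p*(1-q))" thus ?thesis using Bform[OF P] by blast
  next
    assume "mp_invertible st (p*(1-q))" thus ?thesis using E1[OF P] by blast
  next
    assume "mp_invertible st (p - q)" thus ?thesis using E7[OF P] by blast
  next
    assume "mp_invertible st ((1-p)*q)" thus ?thesis using E1[OF Q] E2[OF sq sp] SwQ by blast
  qed
  have Bpq: "mp_invertible st ((1-p)*q*(1-p))" using Bform[OF Q] Swap[OF P Apq] by blast
  note M1 = Mlemma[OF P Apq Bpq]
  have Apq': "mp_invertible st ((1-p)*(1-(1-q))*(1-p))" using Bpq by simp
  have Bpq': "mp_invertible st ((1-(1-p))*(1-q)*(1-(1-p)))" using Apq by simp
  note M2 = Mlemma[OF Pb(1,2,3,4) Apq' Bpq']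
  have e1: "p + (1-p)*q = 1 - (1-p)*(1-q)" by (simp add: algebra_simps)
  have e2: "q + p*(1-q) = 1 - (1-p)*(1-q)" by (simp add: algebra_simps)
  have e3: "p + q*(1-p) = 1 - (1-q)*(1-p)" by (simp add: algebra_simps)
  have e4: "q + (1-q)*p = 1 - (1-q)*(1-p)" by (simp add: algebra_simps)
  have e5: "q - p = 1 - p - (1-q)" by (simp add: algebra_simps)
  have e6: "1 - (1-q) = q" "1 - (1-p) = p" by simp_all
  note M2' = M2[unfolded e6]
  show ?thesis unfolding e1 e2 e3 e4 e5 by (simp only: M1 M2')
qed


end
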